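(* Let $(G,\boldsymbol{\gamma})$ be a reflection-$(2,2)$ graph with symmetric lift $(\tilde G,\varphi)$. Then for a generic assignment of directions $\vec d$, the reflection direction network $(\tilde G,\varphi,\vec d)$ has only collapsed realizations.
   Context: A colored graph $(G,\boldsymbol{\gamma})$ is a finite directed multigraph $G$ (self-loops and parallel edges allowed) with a color $\gamma_{ij}\in\mathbb{Z}/2\mathbb{Z}$ on each edge. $\rho:H_1(G,\mathbb{Z})\to\mathbb{Z}/2\mathbb{Z}$ sends a cycle to the sum of its edge colors; the $\rho$-image of a subgraph is the image of its cycles, trivial if $\{0\}$. For a subgraph $G'$: $n',m'$ are its numbers of vertices and edges, $c'$ (resp. $c'_0$) the number of its connected components with non-trivial (resp. trivial) $\rho$-image. $(G,\boldsymbol{\gamma})$ with $n$ vertices and $m$ edges is a reflection-$(2,2)$ graph if $m=2n-1$ and every subgraph satisfies $m'\le 2n'-c'-2c'_0$. The lift $(\tilde G,\varphi)$ has vertices $\tilde i_\gamma$ ($i\in V(G),\gamma\in\mathbb{Z}/2\mathbb{Z}$), edges $\tilde i_\gamma\tilde j_{\gamma+\gamma_{ij}}$ for each edge $ij$, and $\varphi(\tilde i_\gamma)=\tilde i_{\gamma+1}$. Let $\Phi(1)$ be the reflection $(x,y)\mapsto(-x,y)$ and $\Phi(0)$ the identity. A reflection direction network $(\tilde G,\varphi,\vec d)$ assigns a vector $\vec d_{ij}\in\mathbb{R}^2$ to each edge $ij$ of $G$; its realizations are point sets $\vec p_{\tilde i_\gamma}=\Phi(\gamma)\vec p_i$ determined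 by points $\vec p_i\in\mathbb{R}^2$ ($i\in V(G)$) satisfying $\langle\Phi(\gamma_{ij})\vec p_j-\vec p_i,\vec d_{ij}^\perp\rangle=0$ for all edges $ij$ of $G$, $\vec d^\perp$ denoting rotation by $\pi/2$. A realization is collapsed if all vertices of $\tilde G$ are at the same point. A property holds for generic directions if it holds for all $\vec d\in\mathbb{R}^{2m}$ outside a proper algebraic subset. *)

theory Defs
  imports "HOL-Analysis.Analysis"
begin

text \<open>A colored graph: finite vertex type 'v, finite edge type 'e (multigraph, loops allowed),
  each edge e directed from src e to tgt e, with color gam e :: bool (True = 1 in Z/2Z).\<close>

fun walk :: "('e \<Rightarrow> 'v) \<Rightarrow> ('e \<Rightarrow> 'v) \<Rightarrow> 'e set \<Rightarrow> 'v \<Rightarrow> 'e list \<Rightarrow> 'v \<Rightarrow> bool" where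
  "walk src tgt F u [] v = (u = v)"
| "walk src tgt F u (e # es) v =
     (e \<in> F \<and> ((src e = u \<and> walk src tgt F (tgt e) es v) \<or> (tgt e = u \<and> walk src tgt F (src e) es v)))"

definition rho_walk :: "('e \<Rightarrow> bool) \<Rightarrow> 'e list \<Rightarrow> bool" where
  "rho_walk gam es = odd (length (filter gam es))"

definition is_subgraph :: "('e \<Rightarrow> 'v) \<Rightarrow> ('e \<Rightarrow> 'v) \<Rightarrow> 'v set \<Rightarrow> 'e set \<Rightarrow> bool" where
  "is_subgraph src tgt W F = (\<forall>e\<in>F. src e \<in> W \<and> tgt e \<in> W)"

definition component :: "('e \<Rightarrow> 'v) \<Rightarrow> ('e \<Rightarrow> 'v) \<Rightarrow> 'v set \<Rightarrow> 'e set \<Rightarrow> 'v \<Rightarrow> 'v set" where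
  "component src tgt W F u = {v \<in> W. \<exists>es. walk src tgt F u es v}"

definition components :: "('e \<Rightarrow> 'v) \<Rightarrow> ('e \<Rightarrow> 'v) \<Rightarrow> 'v set \<Rightarrow> 'e set \<Rightarrow> 'v set set" where
  "components src tgt W F = component src tgt W F ` W"

text \<open>A component C has trivial rho-image iff every cycle in it (equivalently every closed walk,
  since closed walks generate H_1) has rho-value 0.\<close>
definition trivial_rho :: "('e \<Rightarrow> 'v) \<Rightarrow> ('e \<Rightarrow> 'v) \<Rightarrow> ('e \<Rightarrow> bool) \<Rightarrow> 'e set \<Rightarrow> 'v set \<Rightarrow> bool" where
  "trivial_rho src tgt gam F C = (\<forall>u\<in>C. \<forall>es. walk src tgt F u es u \<longrightarrow> \<not> rho_walk gam es)"

definition reflection_22_graph ::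
  "('e::finite \<Rightarrow> 'v::finite) \<Rightarrow> ('e \<Rightarrow> 'v) \<Rightarrow> ('e \<Rightarrow> bool) \<Rightarrow> bool" where
  "reflection_22_graph src tgt gam =
     (card (UNIV :: 'e set) + 1 = 2 * card (UNIV :: 'v set) \<and>
      (\<forall>W F. is_subgraph src tgt W F \<longrightarrow>
         (let cs = components src tgt W F;
              c = card {C \<in> cs. \<not> trivial_rho src tgt gam F C};
              c0 = card {C \<in> cs. trivial_rho src tgt gam F C}
          in int (card F) \<le> 2 * int (card W) - int c - 2 * int c0)))"

definition Phi :: "bool \<Rightarrow> real \<times> real \<Rightarrow> real \<times> real" where
  "Phi g p = (if g then (- fst p, snd p) else p)"

definition perp :: "real \<times> real \<Rightarrow> real \<times> real" where
  "perp d = (- snd d, fst d)"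

text \<open>Realization of the reflection direction network with directions d: points p_i for
  vertices of G; the lift vertex (i, g) is placed at Phi g (p i).\<close>
definition is_realization ::
  "('e \<Rightarrow> 'v) \<Rightarrow> ('e \<Rightarrow> 'v) \<Rightarrow> ('e \<Rightarrow> bool) \<Rightarrow> ('e \<Rightarrow> real \<times> real) \<Rightarrow> ('v \<Rightarrow> real \<times> real) \<Rightarrow> bool" where
  "is_realization src tgt gam d p =
     (\<forall>e. (Phi (gam e) (p (tgt e)) - p (src e)) \<bullet> perp (d e) = 0)"

definition lift_placement :: "('v \<Rightarrow> real \<times> real) \<Rightarrow> 'v \<times> bool \<Rightarrow> real \<times> real" where
  "lift_placement p = (\<lambda>(i, g). Phi g (p i))"

definition collapsed :: "('v \<Rightarrow> real \<times> real) \<Rightarrow> bool" where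
  "collapsed p = (\<forall>a b. lift_placement p a = lift_placement p b)"

inductive poly_fun :: "(('e \<Rightarrow> real \<times> real) \<Rightarrow> real) \<Rightarrow> bool" where
  const: "poly_fun (\<lambda>d. c)"
| coord1: "poly_fun (\<lambda>d. fst (d e))"
| coord2: "poly_fun (\<lambda>d. snd (d e))"
| add: "poly_fun f \<Longrightarrow> poly_fun g \<Longrightarrow> poly_fun (\<lambda>d. f d + g d)"
| mult: "poly_fun f \<Longrightarrow> poly_fun g \<Longrightarrow> poly_fun (\<lambda>d. f d * g d)"

text \<open>P holds for generic directions: outside a proper algebraic subset of R^(2m), i.e.
  outside the zero set of some not-identically-zero polynomial.\<close>
definition generic :: "(('e::finite \<Rightarrow> real \<times> real) \<Rightarrow> bool) \<Rightarrow> bool" where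
  "generic P = (\<exists>f. poly_fun f \<and> (\<exists>d. f d \<noteq> 0) \<and> (\<forall>d. f d \<noteq> 0 \<longrightarrow> P d))"

end

theory Submission
  imports Defs
begin


lemma dim_submod:
  fixes X Y :: "'a::euclidean_space set"
  shows "dim (X \<union> Y) + dim (X \<inter> Y) \<le> dim X + dim Y"
proof -
  have 1: "dim (X \<union> Y) = dim {x + y |x y. x \<in> span X \<and> y \<in> span Y}"
    using dim_span[of "X \<union> Y"] span_Un[of X Y] by simp
  have 2: "dim (X \<inter> Y) \<le> dim (span X \<inter> span Y)"
    by (rule dim_subset) (auto intro: span_base)
  have 3: "dim {x + y |x y. x \<in> span X \<and> y \<in> span Y} + dim (span X \<inter> span Y) = dim X + dim Y"
    using dim_sums_Int[OF subspace_span subspace_span, of X Y] by (simp add: dim_span)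
  show ?thesis using 1 2 3 by linarith
qed

lemma sum_card_upd_less:
  fixes A :: "'e::finite \<Rightarrow> 'a set"
  assumes "S \<subset> A e" "finite (A e)"
  shows "(\<Sum>x\<in>UNIV. card ((A(e := S)) x)) < (\<Sum>x\<in>UNIV. card (A x))"
proof (rule sum_strict_mono_ex1)
  have "card S < card (A e)" using assms psubset_card_mono by blast
  then show "\<exists>a\<in>UNIV. card ((A(e := S)) a) < card (A a)" by auto
  show "\<forall>x\<in>UNIV. card ((A(e := S)) x) \<le> card (A x)"
    using \<open>card S < card (A e)\<close> by auto
qed auto

lemma rado:
  fixes A :: "'e::finite \<Rightarrow> 'a::euclidean_space set"
  assumes "\<forall>e. finite (A e) \<and> A e \<noteq> {}"
    and "\<forall>F. card F \<le> dim (\<Union>(A ` F))"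
  shows "\<exists>f. (\<forall>e. f e \<in> A e) \<and> inj f \<and> independent (range f)"
  using assms
proof (induction "\<Sum>e\<in>UNIV. card (A e)" arbitrary: A rule: less_induct)
  case less
  show ?case
  proof (cases "\<exists>e. 2 \<le> card (A e)")
    case False
    have c1: "\<forall>e. card (A e) = 1"
    proof
      fix e
      have "card (A e) \<noteq> 0" using less.prems(1) by auto
      moreover have "\<not> 2 \<le> card (A e)" using False by blast
      ultimately show "card (A e) = 1" by linarith
    qed
    define f where "f e = the_elem (A e)" for e
    have Af: "A e = {f e}" for e
      using c1 unfolding f_def by (metis is_singleton_altdef is_singleton_the_elem)
    have inj: "inj f"
    proof (rule injI, rule ccontr)
      fix a b assume ab: "f a = f b" "a \<noteq> b"
      have "card {a, b} \<le> dim (\<Union>(A ` {a,b}))" using less.prems(2) by blast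
      also have "\<Union>(A ` {a,b}) = {f a}" using Af ab by auto
      also have "dim {f a} \<le> card {f a}" by (rule dim_le_card) (auto intro: span_base)
      finally show False using ab by simp
    qed
    have un: "\<Union>(A ` UNIV) = range f" using Af by auto
    have "card (UNIV::'e set) \<le> dim (\<Union>(A ` UNIV))" using less.prems(2) by blast
    then have "card (range f) \<le> dim (range f)"
      using un card_image[OF inj] by simp
    then have "independent (range f)"
      by (intro card_le_dim_spanning[of "range f" "range f"]) (auto intro: span_base)
    then show ?thesis using Af inj by auto
  next
    case True
    then obtain e where e: "2 \<le> card (A e)" by blast
    have fin: "finite (A e)" using less.prems(1) by auto
    obtain x1 where x1: "x1 \<in> A e" using less.prems(1) by blast
    have "card (A e - {x1}) \<ge> 1" using e x1 fin by (simp add: card_Diff_singleton)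
    then have "A e - {x1} \<noteq> {}" by (metis card.empty not_one_le_zero)
    then obtain x2 where x2: "x2 \<in> A e" "x2 \<noteq> x1" by blast
    define A1 where "A1 = A(e := A e - {x1})"
    define A2 where "A2 = A(e := A e - {x2})"
    have ne1: "\<forall>e'. finite (A1 e') \<and> A1 e' \<noteq> {}" using less.prems(1) x1 x2 unfolding A1_def by auto
    have ne2: "\<forall>e'. finite (A2 e') \<and> A2 e' \<noteq> {}" using less.prems(1) x1 x2 unfolding A2_def by auto
    have lt1: "(\<Sum>e\<in>UNIV. card (A1 e)) < (\<Sum>e\<in>UNIV. card (A e))"
      unfolding A1_def by (rule sum_card_upd_less) (use x1 fin in auto)
    have lt2: "(\<Sum>e\<in>UNIV. card (A2 e)) < (\<Sum>e\<in>UNIV. card (A e))"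
      unfolding A2_def by (rule sum_card_upd_less) (use x2 fin in auto)
    have sub1: "A1 e' \<subseteq> A e'" for e' unfolding A1_def by auto
    have sub2: "A2 e' \<subseteq> A e'" for e' unfolding A2_def by auto
    have "(\<forall>F. card F \<le> dim (\<Union>(A1 ` F))) \<or> (\<forall>F. card F \<le> dim (\<Union>(A2 ` F)))"
    proof (rule ccontr)
      assume "\<not> ?thesis"
      then obtain F1 F2 where F1: "dim (\<Union>(A1 ` F1)) < card F1" and F2: "dim (\<Union>(A2 ` F2)) < card F2"
        by (meson not_le)
      have eF1: "e \<in> F1"
      proof (rule ccontr)
        assume "e \<notin> F1"
        then have "\<Union>(A1 ` F1) = \<Union>(A ` F1)" unfolding A1_def by auto
        then show False using F1 less.prems(2) by (metis not_le)
      qed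
      have eF2: "e \<in> F2"
      proof (rule ccontr)
        assume "e \<notin> F2"
        then have "\<Union>(A2 ` F2) = \<Union>(A ` F2)" unfolding A2_def by auto
        then show False using F2 less.prems(2) by (metis not_le)
      qed
      define G1 where "G1 = F1 - {e}"
      define G2 where "G2 = F2 - {e}"
      define X where "X = \<Union>(A ` G1) \<union> (A e - {x1})"
      define Y where "Y = \<Union>(A ` G2) \<union> (A e - {x2})"
      have X: "X = \<Union>(A1 ` F1)" unfolding X_def A1_def G1_def using eF1 by auto
      have Y: "Y = \<Union>(A2 ` F2)" unfolding Y_def A2_def G2_def using eF2 by auto
      have cF1: "card F1 = card G1 + 1" unfolding G1_def using card_Suc_Diff1[OF finite eF1] by simp
      have cF2: "card F2 = card G2 + 1" unfolding G2_def using card_Suc_Diff1[OF finite eF2] by simp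
      have dX: "dim X \<le> card G1" using F1 X cF1 by simp
      have dY: "dim Y \<le> card G2" using F2 Y cF2 by simp
      have u: "\<Union>(A ` (insert e (G1 \<union> G2))) \<subseteq> X \<union> Y" unfolding X_def Y_def using x1 x2 by auto
      have i: "\<Union>(A ` (G1 \<inter> G2)) \<subseteq> X \<inter> Y" unfolding X_def Y_def by auto
      have eG: "e \<notin> G1 \<union> G2" unfolding G1_def G2_def by auto
      have c1: "card (insert e (G1 \<union> G2)) = card (G1 \<union> G2) + 1" using eG by simp
      have c2: "card (G1 \<union> G2) + card (G1 \<inter> G2) = card G1 + card G2"
        using card_Un_Int[of G1 G2] by simp
      have "card (insert e (G1 \<union> G2)) \<le> dim (X \<union> Y)"
        using less.prems(2) dim_subset[OF u] le_trans by blast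
      moreover have "card (G1 \<inter> G2) \<le> dim (X \<inter> Y)"
        using less.prems(2) dim_subset[OF i] le_trans by blast
      moreover note dim_submod[of X Y]
      ultimately show False using dX dY c1 c2 by linarith
    qed
    then show ?thesis
    proof
      assume "\<forall>F. card F \<le> dim (\<Union>(A1 ` F))"
      from less.hyps[OF lt1 ne1 this] obtain f where "(\<forall>e. f e \<in> A1 e) \<and> inj f \<and> independent (range f)" by blast
      then show ?thesis using sub1 by blast
    next
      assume "\<forall>F. card F \<le> dim (\<Union>(A2 ` F))"
      from less.hyps[OF lt2 ne2 this] obtain f where "(\<forall>e. f e \<in> A2 e) \<and> inj f \<and> independent (range f)" by blast
      then show ?thesis using sub2 by blast
    qed
  qed
qed



definition sgnb :: "bool \<Rightarrow> real" where "sgnb g = (if g then -1 else 1)"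

definition Yv :: "('e \<Rightarrow> 'v::finite) \<Rightarrow> ('e \<Rightarrow> 'v) \<Rightarrow> 'e \<Rightarrow> real^('v\<times>bool)" where
  "Yv src tgt e = axis (tgt e, True) 1 - axis (src e, True) 1"

definition Xv :: "('e \<Rightarrow> 'v::finite) \<Rightarrow> ('e \<Rightarrow> 'v) \<Rightarrow> ('e \<Rightarrow> bool) \<Rightarrow> 'e \<Rightarrow> real^('v\<times>bool)" where
  "Xv src tgt gam e = axis (src e, False) 1 - sgnb (gam e) *\<^sub>R axis (tgt e, False) 1"

lemma inner_Yv: "a \<bullet> Yv src tgt e = a$(tgt e,True) - a$(src e,True)"
  by (simp add: Yv_def inner_diff_right inner_axis)

lemma inner_Xv: "a \<bullet> Xv src tgt gam e = a$(src e,False) - sgnb (gam e) * a$(tgt e,False)"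
  by (simp add: Xv_def inner_diff_right inner_axis)

lemma rho_cons: "rho_walk gam (e#es) = (gam e \<noteq> rho_walk gam es)"
  by (simp add: rho_walk_def)

lemma walk_y:
  "walk src tgt F u es v \<Longrightarrow> \<forall>e\<in>F. a \<bullet> Yv src tgt e = 0 \<Longrightarrow> a$(v,True) = a$(u,True)"
  by (induction es arbitrary: u) (auto simp: inner_Yv)

lemma walk_x:
  "walk src tgt F u es v \<Longrightarrow> \<forall>e\<in>F. a \<bullet> Xv src tgt gam e = 0 \<Longrightarrow>
    a$(v,False) = (if rho_walk gam es then -1 else 1) * a$(u,False)"
proof (induction es arbitrary: u)
  case Nil
  then show ?case by (simp add: rho_walk_def)
next
  case (Cons e es)
  have eF: "e \<in> F" using Cons.prems by simp
  have X: "a$(src e,False) = sgnb (gam e) * a$(tgt e,False)"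
    using Cons.prems(2) eF by (simp add: inner_Xv)
  show ?case
  proof (cases "src e = u \<and> walk src tgt F (tgt e) es v")
    case True
    then have "a$(v,False) = (if rho_walk gam es then -1 else 1) * a$(tgt e,False)"
      using Cons by blast
    then show ?thesis using X True by (auto simp: rho_cons sgnb_def)
  next
    case False
    then have T: "tgt e = u" "walk src tgt F (src e) es v" using Cons.prems by auto
    then have "a$(v,False) = (if rho_walk gam es then -1 else 1) * a$(src e,False)"
      using Cons by blast
    then show ?thesis using X T by (auto simp: rho_cons sgnb_def)
  qed
qed

lemma walk_x':
  assumes "walk src tgt F u es v" "\<forall>e\<in>F. a \<bullet> Xv src tgt gam e = 0" "a$(v,False) = 0"
  shows "a$(u,False) = 0"
  using walk_x[OF assms(1,2)] assms(3) by (auto split: if_splits)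

lemma hall:
  fixes src tgt :: "'e::finite \<Rightarrow> 'v::finite" and gam :: "'e \<Rightarrow> bool"
  assumes "reflection_22_graph src tgt gam"
  shows "card F \<le> dim (\<Union>e\<in>F. {Xv src tgt gam e, Yv src tgt e})"
proof -
  define comps where "comps = components src tgt UNIV F"
  define triv where "triv = trivial_rho src tgt gam F"
  define r where "r C = (SOME u. C = component src tgt UNIV F u)" for C
  define S where "S = (\<Union>e\<in>F. {Xv src tgt gam e, Yv src tgt e})"
  define G :: "(real^('v\<times>bool)) set" where
    "G = (\<lambda>C. axis (r C, True) 1) ` comps \<union> (\<lambda>C. axis (r C, False) 1) ` {C\<in>comps. triv C}"
  have comp_walk: "v \<in> component src tgt UNIV F u \<longleftrightarrow> (\<exists>es. walk src tgt F u es v)" for u v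
    by (simp add: component_def)
  have rC: "C = component src tgt UNIV F (r C)" if CC: "C \<in> comps" for C
  proof -
    obtain u where "C = component src tgt UNIV F u" using CC unfolding comps_def components_def by blast
    then show ?thesis unfolding r_def by (rule someI)
  qed
  have spanU: "span (S \<union> G) = UNIV"
  proof (rule ccontr)
    assume "span (S \<union> G) \<noteq> UNIV"
    then obtain a :: "real^('v\<times>bool)" where a: "a \<noteq> 0" "\<forall>x\<in>span (S \<union> G). a \<bullet> x = 0"
      using span_not_UNIV_orthogonal by blast
    have aSG: "\<forall>x\<in>S \<union> G. a \<bullet> x = 0" using a(2) span_base by blast
    have aY: "\<forall>e\<in>F. a \<bullet> Yv src tgt e = 0" and aX: "\<forall>e\<in>F. a \<bullet> Xv src tgt gam e = 0"
      using aSG unfolding S_def by auto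
    have "a = 0"
    proof (subst vec_eq_iff, rule allI)
      fix i :: "'v \<times> bool"
      obtain v b where i: "i = (v, b)" by force
      define C where "C = component src tgt UNIV F v"
      have C: "C \<in> comps" unfolding C_def comps_def components_def by blast
      have vC: "v \<in> C" unfolding C_def comp_walk by (rule exI[of _ "[]"]) simp
      then obtain es where es: "walk src tgt F (r C) es v"
        using rC[OF C] comp_walk by (metis)
      have ay: "a$(v,True) = 0"
      proof -
        have "axis (r C, True) 1 \<in> G" unfolding G_def using C by blast
        then have "a \<bullet> axis (r C, True) 1 = 0" using aSG by blast
        then have "a$(r C, True) = 0" by (simp add: inner_axis)
        then show ?thesis using walk_y[OF es aY] by simp
      qed
      have ax: "a$(v,False) = 0"
      proof (cases "triv C")
        case True
        have "axis (r C, False) 1 \<in> G" unfolding G_def using C True by blast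
        then have "a \<bullet> axis (r C, False) 1 = 0" using aSG by blast
        then have "a$(r C, False) = 0" by (simp add: inner_axis)
        then show ?thesis using walk_x[OF es aX] by simp
      next
        case False
        then obtain u es' where u: "u \<in> C" "walk src tgt F u es' u" "rho_walk gam es'"
          unfolding triv_def trivial_rho_def by blast
        have "a$(u,False) = - a$(u,False)" using walk_x[OF u(2) aX] u(3) by simp
        then have au: "a$(u,False) = 0" by simp
        obtain es'' where "walk src tgt F v es'' u" using u(1) unfolding C_def comp_walk by blast
        then show ?thesis using walk_x'[OF _ aX au] by blast
      qed
      show "a $ i = 0 $ i" using ay ax i by (cases b) auto
    qed
    then show False using a(1) by simp
  qed
  define c where "c = card {C \<in> comps. \<not> triv C}"
  define c0 where "c0 = card {C \<in> comps. triv C}"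
  have hyp: "int (card F) \<le> 2 * int (card (UNIV::'v set)) - int c - 2 * int c0"
    using assms unfolding reflection_22_graph_def c_def c0_def comps_def triv_def Let_def is_subgraph_def
    by blast
  have cc: "card comps = c + c0"
  proof -
    have "comps = {C \<in> comps. \<not> triv C} \<union> {C \<in> comps. triv C}" by blast
    then show ?thesis unfolding c_def c0_def
      by (metis (no_types, lifting) card_Un_disjoint disjoint_iff finite mem_Collect_eq)
  qed
  have cG: "card G \<le> c + 2 * c0"
  proof -
    have "card G \<le> card ((\<lambda>C. axis (r C, True) (1::real)) ` comps) + card ((\<lambda>C. axis (r C, False) (1::real)) ` {C\<in>comps. triv C})"
      unfolding G_def by (rule card_Un_le)
    also have "\<dots> \<le> card comps + c0" unfolding c0_def
      by (intro add_mono card_image_le) auto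
    finally show ?thesis using cc by simp
  qed
  have finG: "finite G" unfolding G_def by simp
  have dG: "dim G \<le> card G" by (rule dim_le_card[OF _ finG]) (auto intro: span_base)
  have dSG: "dim (S \<union> G) \<le> dim S + dim G" using dim_submod[of S G] by simp
  have dU: "dim (S \<union> G) = 2 * card (UNIV::'v set)"
  proof -
    have "dim (S \<union> G) = dim (UNIV :: (real^('v\<times>bool)) set)" using spanU by (metis dim_span)
    also have "\<dots> = CARD('v \<times> bool)" by simp
    also have "\<dots> = 2 * card (UNIV::'v set)" by (simp add: card_UNIV_bool)
    finally show ?thesis .
  qed
  have "card F \<le> dim S" using hyp dSG dG cG dU by linarith
  then show ?thesis unfolding S_def .
qed



lemma inner_Yv': "Yv src tgt e \<bullet> a = a$(tgt e,True) - a$(src e,True)"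
  by (simp add: inner_commute inner_Yv)
lemma inner_Xv': "Xv src tgt gam e \<bullet> a = a$(src e,False) - sgnb (gam e) * a$(tgt e,False)"
  by (simp add: inner_commute inner_Xv)
lemma rowv_inner: "(a *\<^sub>R Yv src tgt e + b *\<^sub>R Xv src tgt gam e) \<bullet> z
   = a * (z$(tgt e,True) - z$(src e,True)) + b * (z$(src e,False) - sgnb (gam e) * z$(tgt e,False))"
  by (simp add: inner_add_left inner_Yv' inner_Xv')
lemma phi_inner: "(Phi g q - p) \<bullet> perp d = fst d * (snd q - snd p) + snd d * (fst p - sgnb g * fst q)"
  by (cases g) (simp_all add: Phi_def perp_def sgnb_def inner_prod_def algebra_simps)

lemma poly_fun_sum:
  "finite S \<Longrightarrow> (\<forall>x\<in>S. poly_fun (f x)) \<Longrightarrow> poly_fun (\<lambda>d. \<Sum>x\<in>S. f x d)"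
proof (induction S rule: finite_induct)
  case empty
  then show ?case by (simp add: poly_fun.const)
next
  case (insert x S)
  then have "poly_fun (\<lambda>d. f x d + (\<Sum>x\<in>S. f x d))" by (intro poly_fun.add) auto
  then show ?case using insert by simp
qed

lemma poly_fun_prod:
  "finite S \<Longrightarrow> (\<forall>x\<in>S. poly_fun (f x)) \<Longrightarrow> poly_fun (\<lambda>d. \<Prod>x\<in>S. f x d)"
proof (induction S rule: finite_induct)
  case empty
  then show ?case by (simp add: poly_fun.const)
next
  case (insert x S)
  then have "poly_fun (\<lambda>d. f x d * (\<Prod>x\<in>S. f x d))" by (intro poly_fun.mult) auto
  then show ?case using insert by simp
qed

lemma poly_fun_det:
  fixes M :: "('e \<Rightarrow> real \<times> real) \<Rightarrow> real^'n^'n"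
  assumes "\<And>i j. poly_fun (\<lambda>d. M d $ i $ j)"
  shows "poly_fun (\<lambda>d. det (M d))"
proof -
  have "poly_fun (\<lambda>d. \<Sum>p\<in>{p. p permutes UNIV}. of_int (sign p) * (\<Prod>i\<in>UNIV. M d $ i $ p i))"
  proof (rule poly_fun_sum)
    show "\<forall>p\<in>{p. p permutes UNIV}. poly_fun (\<lambda>d. of_int (sign p) * (\<Prod>i\<in>UNIV. M d $ i $ p i))"
    proof
      fix p
      show "poly_fun (\<lambda>d. of_int (sign p) * (\<Prod>i\<in>UNIV. M d $ i $ p i))"
        by (intro poly_fun.mult poly_fun.const poly_fun_prod) (auto intro: assms)
    qed
  qed simp
  then show ?thesis by (simp add: det_def)
qed

lemma det_ne0_kernel:
  fixes A :: "real^'n^'n"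
  assumes "\<And>z. A *v z = 0 \<Longrightarrow> z = 0"
  shows "det A \<noteq> 0"
proof -
  have "inj ((*v) A)"
  proof (rule injI)
    fix x y assume "A *v x = A *v y"
    then have "A *v (x - y) = 0" by (simp add: matrix_vector_mult_diff_distrib)
    then have "x - y = 0" using assms by blast
    then show "x = y" by simp
  qed
  then show ?thesis using det_nz_iff_inj[of "(*v) A"] by simp
qed

lemma det_ne0_kernel2:
  fixes A :: "real^'n^'n"
  assumes "det A \<noteq> 0" "A *v z = 0"
  shows "z = 0"
proof -
  have "inj ((*v) A)" using det_nz_iff_inj[of "(*v) A"] assms(1) by simp
  moreover have "A *v 0 = 0" by simp
  ultimately show ?thesis using assms(2) by (metis injD)
qed

theorem proposition8:
  fixes src :: "'e::finite \<Rightarrow> 'v::finite" and tgt :: "'e \<Rightarrow> 'v" and gam :: "'e \<Rightarrow> bool"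
  assumes "reflection_22_graph src tgt gam"
  shows "generic (\<lambda>d. \<forall>p. is_realization src tgt gam d p \<longrightarrow> collapsed p)"
proof -
  have hallc: "\<forall>F. card F \<le> dim (\<Union>((\<lambda>e. {Xv src tgt gam e, Yv src tgt e}) ` F))"
    using hall[OF assms] by blast
  obtain g where g: "\<forall>e. g e \<in> {Xv src tgt gam e, Yv src tgt e}" "inj g" "independent (range g)"
    using rado[OF _ hallc] by auto
  have cE: "card (UNIV::'e set) + 1 = 2 * card (UNIV::'v set)"
    using assms unfolding reflection_22_graph_def by simp
  have cO: "card (UNIV :: 'e option set) = card (UNIV::'e set) + 1"
  proof -
    have "card (UNIV :: 'e option set) = card (insert None (range (Some :: 'e \<Rightarrow> _)))"
      by (simp add: UNIV_option_conv[symmetric])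
    also have "\<dots> = card (range (Some :: 'e \<Rightarrow> _)) + 1" by (subst card_insert_disjoint) auto
    also have "\<dots> = card (UNIV::'e set) + 1" by (simp add: card_image)
    finally show ?thesis .
  qed
  have cP: "card (UNIV :: ('v \<times> bool) set) = 2 * card (UNIV::'v set)" by (simp add: card_UNIV_bool)
  obtain h where h: "bij_betw h (UNIV::('v\<times>bool) set) (UNIV :: 'e option set)"
    using finite_same_card_bij[of "UNIV::('v\<times>bool) set" "UNIV :: 'e option set"] cO cE cP by auto
  have hsurj: "\<exists>i. h i = x" for x using h unfolding bij_betw_def by (metis surjD)
  define v0 :: 'v where "v0 = undefined"
  define rowv where "rowv d e = fst (d e) *\<^sub>R Yv src tgt e + snd (d e) *\<^sub>R Xv src tgt gam e"
    for d :: "'e \<Rightarrow> real \<times> real" and e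
  define dl :: "real^('v\<times>bool)" where "dl = axis (v0,True) 1"
  define M where "M d = (\<chi> i. case h i of Some e \<Rightarrow> rowv d e | None \<Rightarrow> dl)" for d
  define f where "f d = det (M d)" for d
  show ?thesis unfolding generic_def
  proof (intro exI conjI allI impI)
    show "poly_fun f" unfolding f_def
    proof (rule poly_fun_det)
      fix i j
      show "poly_fun (\<lambda>d. M d $ i $ j)"
      proof (cases "h i")
        case None
        then have "(\<lambda>d. M d $ i $ j) = (\<lambda>d. dl $ j)" by (simp add: M_def)
        then show ?thesis by (simp add: poly_fun.const)
      next
        case (Some e)
        then have "(\<lambda>d. M d $ i $ j) = (\<lambda>d. fst (d e) * Yv src tgt e $ j + snd (d e) * Xv src tgt gam e $ j)"
          by (simp add: M_def rowv_def)
        moreover have "poly_fun (\<lambda>d. fst (d e) * Yv src tgt e $ j + snd (d e) * Xv src tgt gam e $ j)"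
          by (intro poly_fun.add poly_fun.mult poly_fun.const poly_fun.coord1 poly_fun.coord2)
        ultimately show ?thesis by simp
      qed
    qed
  next
    define d0 where "d0 e = (if g e = Yv src tgt e then (1::real,0::real) else (0,1))" for e
    have rd0: "rowv d0 e = g e" for e
    proof (cases "g e = Yv src tgt e")
      case True then show ?thesis by (simp add: rowv_def d0_def)
    next
      case False then have "g e = Xv src tgt gam e" using g(1) by auto
      then show ?thesis using False by (simp add: rowv_def d0_def)
    qed
    define u :: "real^('v\<times>bool)" where "u = (\<chi> i. if snd i then 1 else 0)"
    have ug: "\<forall>y\<in>range g. orthogonal u y"
    proof
      fix y assume "y \<in> range g"
      then obtain e where "y = g e" by blast
      then have "y = Xv src tgt gam e \<or> y = Yv src tgt e" using g(1) by auto
      then show "orthogonal u y"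
        by (auto simp: orthogonal_def inner_Xv inner_Yv u_def)
    qed
    have udl: "u \<bullet> dl = 1" by (simp add: dl_def u_def inner_axis)
    have dln: "dl \<notin> span (range g)"
    proof
      assume "dl \<in> span (range g)"
      from orthogonal_to_span[OF this] ug have "orthogonal u dl" by blast
      then show False using udl by (simp add: orthogonal_def)
    qed
    define R where "R = insert dl (range g)"
    have indR: "independent R" unfolding R_def using independent_insertI[OF dln g(3)] .
    have cR: "card R = card (UNIV::'e set) + 1"
    proof -
      have "dl \<notin> range g" using dln span_base by blast
      then have "card R = card (range g) + 1" unfolding R_def by (simp add: card_insert_disjoint)
      then show ?thesis using card_image[OF g(2)] by simp
    qed
    have spanR: "UNIV \<subseteq> span R"
      by (rule card_ge_dim_independent[OF _ indR]) (use cR cE cP in simp_all)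
    have rows: "M d0 $ i \<in> R" for i
      by (cases "h i") (auto simp: M_def R_def rd0)
    have rowsall: "\<forall>r\<in>R. \<exists>i. M d0 $ i = r"
    proof
      fix r assume "r \<in> R"
      then show "\<exists>i. M d0 $ i = r" unfolding R_def
      proof
        assume "r = dl"
        obtain i where "h i = None" using hsurj by blast
        then have "M d0 $ i = dl" by (simp add: M_def)
        then show ?thesis using \<open>r = dl\<close> by blast
      next
        assume "r \<in> range g"
        then obtain e where e: "r = g e" by blast
        obtain i where "h i = Some e" using hsurj by blast
        then have "M d0 $ i = g e" by (simp add: M_def rd0)
        then show ?thesis using e by blast
      qed
    qed
    have "det (M d0) \<noteq> 0"
    proof (rule det_ne0_kernel)
      fix z assume z: "M d0 *v z = 0"
      have "\<forall>i. M d0 $ i \<bullet> z = 0" using z by (simp add: vec_eq_iff matrix_vector_mul_component)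
      then have "\<forall>y\<in>R. orthogonal z y" using rowsall by (auto simp: orthogonal_def inner_commute)
      then have "orthogonal z z" using orthogonal_to_span[of z R z] spanR by blast
      then show "z = 0" using orthogonal_self by blast
    qed
    then show "f d0 \<noteq> 0" unfolding f_def .
  next
    fix d p
    assume fd: "f d \<noteq> 0" and real: "is_realization src tgt gam d p"
    define z :: "real^('v\<times>bool)" where
      "z = (\<chi> i. if snd i then snd (p (fst i)) - snd (p v0) else fst (p (fst i)))"
    have "M d *v z = 0"
    proof (subst vec_eq_iff, rule allI)
      fix i
      show "(M d *v z) $ i = 0 $ i"
      proof (cases "h i")
        case None
        then show ?thesis by (simp add: matrix_vector_mul_component M_def dl_def z_def inner_axis')
      next
        case (Some e)
        have "rowv d e \<bullet> z = fst (d e) * (z $ (tgt e, True) - z $ (src e, True))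
            + snd (d e) * (z $ (src e, False) - sgnb (gam e) * z $ (tgt e, False))"
          unfolding rowv_def by (rule rowv_inner)
        also have "\<dots> = (Phi (gam e) (p (tgt e)) - p (src e)) \<bullet> perp (d e)"
          unfolding phi_inner by (simp add: z_def algebra_simps)
        also have "\<dots> = 0" using real unfolding is_realization_def by blast
        finally show ?thesis using Some by (simp add: matrix_vector_mul_component M_def)
      qed
    qed
    then have z0: "z = 0" using det_ne0_kernel2 fd unfolding f_def by blast
    have pv: "p v = (0, snd (p v0))" for v
    proof -
      have "z $ (v, False) = 0" "z $ (v, True) = 0" using z0 by simp_all
      then show ?thesis by (simp add: z_def prod_eq_iff)
    qed
    obtain c where pc: "\<And>v. p v = (0, c)" using pv by blast
    show "collapsed p" unfolding collapsed_def lift_placement_def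
      by (auto simp: pc Phi_def)
  qed
qed

end
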